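(* Let $\mathbb{F}$ be a field of characteristic $2$ with at least $4$ elements, and let $B\in M_3(\mathbb{F})$ be a non-derogative matrix with trace $u_2$. Then for every $a\in\mathbb{F}$ with $a\neq u_2$ and $a\neq u_2+1$, there exist $N,D\in M_3(\mathbb{F})$ with $B=N+D$, $N^2=0$, and $D$ diagonalizable with eigenvalues $a$, $a+1$, $u_2+1$.
   Context: A square matrix is non-derogative if its minimal polynomial equals its characteristic polynomial. A matrix $D\in M_n(\mathbb{F})$ is diagonalizable if there exists an invertible $U\in M_n(\mathbb{F})$ such that $U^{-1}DU$ is diagonal. *)

theory Defs
  imports "Jordan_Normal_Form.Char_Poly"
begin

definition mat_trace :: "'a :: comm_ring_1 mat \<Rightarrow> 'a" where
  "mat_trace A = (\<Sum>i<dim_row A. A $$ (i,i))"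

definition mat_poly_eval :: "'a :: comm_ring_1 poly \<Rightarrow> 'a mat \<Rightarrow> 'a mat" where
  "mat_poly_eval p A = mat (dim_row A) (dim_col A)
     (\<lambda>(i,j). \<Sum>k\<le>degree p. coeff p k * (A ^\<^sub>m k) $$ (i,j))"

definition is_minimal_polynomial :: "'a :: field mat \<Rightarrow> 'a poly \<Rightarrow> bool" where
  "is_minimal_polynomial A p \<longleftrightarrow>
     lead_coeff p = 1 \<and>
     mat_poly_eval p A = 0\<^sub>m (dim_row A) (dim_col A) \<and>
     (\<forall>q. q \<noteq> 0 \<longrightarrow> mat_poly_eval q A = 0\<^sub>m (dim_row A) (dim_col A) \<longrightarrow> degree p \<le> degree q)"

definition non_derogative :: "'a :: field mat \<Rightarrow> bool" where
  "non_derogative A \<longleftrightarrow> is_minimal_polynomial A (char_poly A)"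

end

theory Submission
  imports Defs
begin


definition vec3 :: "'a \<Rightarrow> 'a \<Rightarrow> 'a \<Rightarrow> 'a vec" where
  "vec3 x y z = vec 3 (\<lambda>i. if i = 0 then x else if i = 1 then y else z)"

definition mat3 :: "'a \<Rightarrow> 'a \<Rightarrow> 'a \<Rightarrow> 'a \<Rightarrow> 'a \<Rightarrow> 'a \<Rightarrow> 'a \<Rightarrow> 'a \<Rightarrow> 'a \<Rightarrow> 'a mat" where
  "mat3 a b c d e f g h k = mat 3 3 (\<lambda>(i,j).
     if i = 0 then (if j = 0 then a else if j = 1 then b else c)
     else if i = 1 then (if j = 0 then d else if j = 1 then e else f)
     else (if j = 0 then g else if j = 1 then h else k))"

lemma less3_cases: "(i::nat) < 3 \<Longrightarrow> i = 0 \<or> i = 1 \<or> i = 2" by auto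

lemma sum3: "(\<Sum>i<3. f i) = f 0 + f 1 + f (2::nat)"
  by (simp add: numeral_3_eq_3 lessThan_Suc numeral_2_eq_2 ac_simps)

lemma sum3': "(\<Sum>i\<in>{0..<3}. f i) = f 0 + f 1 + f (2::nat)"
  by (simp add: numeral_3_eq_3 atLeast0LessThan lessThan_Suc numeral_2_eq_2 ac_simps)

lemma vec3_carrier[simp]: "vec3 x y z \<in> carrier_vec 3"
  by (simp add: vec3_def)

lemma mat3_carrier[simp]: "mat3 a b c d e f g h k \<in> carrier_mat 3 3"
  by (simp add: mat3_def)

lemma vec3_dim[simp]: "dim_vec (vec3 x y z) = 3" by (simp add: vec3_def)
lemma mat3_dim[simp]: "dim_row (mat3 a b c d e f g h k) = 3" "dim_col (mat3 a b c d e f g h k) = 3"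
  by (simp_all add: mat3_def)

lemma vec3_idx[simp]: "vec3 x y z $ 0 = x" "vec3 x y z $ 1 = y" "vec3 x y z $ 2 = z"
  by (simp_all add: vec3_def)

lemma mat3_idx[simp]:
  "mat3 a b c d e f g h k $$ (0,0) = a" "mat3 a b c d e f g h k $$ (0,1) = b" "mat3 a b c d e f g h k $$ (0,2) = c"
  "mat3 a b c d e f g h k $$ (1,0) = d" "mat3 a b c d e f g h k $$ (1,1) = e" "mat3 a b c d e f g h k $$ (1,2) = f"
  "mat3 a b c d e f g h k $$ (2,0) = g" "mat3 a b c d e f g h k $$ (2,1) = h" "mat3 a b c d e f g h k $$ (2,2) = k"
  by (simp_all add: mat3_def)

lemma vec3_idx'[simp]: "vec3 x y z $ Suc 0 = y" "vec3 x y z $ Suc (Suc 0) = z"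
  by (simp_all add: vec3_def)

lemma mat3_idx'[simp]:
  "mat3 a b c d e f g h k $$ (0,Suc 0) = b" "mat3 a b c d e f g h k $$ (0,Suc (Suc 0)) = c"
  "mat3 a b c d e f g h k $$ (Suc 0,0) = d" "mat3 a b c d e f g h k $$ (Suc 0,Suc 0) = e" "mat3 a b c d e f g h k $$ (Suc 0,Suc (Suc 0)) = f"
  "mat3 a b c d e f g h k $$ (Suc (Suc 0),0) = g" "mat3 a b c d e f g h k $$ (Suc (Suc 0),Suc 0) = h" "mat3 a b c d e f g h k $$ (Suc (Suc 0),Suc (Suc 0)) = k"
  by (simp_all add: mat3_def)

lemma vec3_eta: "v \<in> carrier_vec 3 \<Longrightarrow> v = vec3 (v$0) (v$1) (v$2)"
  by (rule eq_vecI, auto simp: vec3_def dest!: less3_cases)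

lemma mat3_eta: "A \<in> carrier_mat 3 3 \<Longrightarrow>
  A = mat3 (A$$(0,0)) (A$$(0,1)) (A$$(0,2)) (A$$(1,0)) (A$$(1,1)) (A$$(1,2)) (A$$(2,0)) (A$$(2,1)) (A$$(2,2))"
  by (rule eq_matI, auto simp: mat3_def dest!: less3_cases)

lemma vec3_eq_iff[simp]: "(vec3 x y z = vec3 x' y' z') = (x = x' \<and> y = y' \<and> z = z')"
  by (metis vec3_idx vec3_def)

lemma mat3_eq_iff[simp]: "(mat3 a b c d e f g h k = mat3 a' b' c' d' e' f' g' h' k') =
  (a = a' \<and> b = b' \<and> c = c' \<and> d = d' \<and> e = e' \<and> f = f' \<and> g = g' \<and> h = h' \<and> k = k')"
  by (metis mat3_idx mat3_def)

lemma mat3_mult[simp]: "mat3 a b c d e f g h k * mat3 a' b' c' d' e' f' g' h' k' =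
  mat3 (a*a'+b*d'+c*g') (a*b'+b*e'+c*h') (a*c'+b*f'+c*k')
       (d*a'+e*d'+f*g') (d*b'+e*e'+f*h') (d*c'+e*f'+f*k')
       (g*a'+h*d'+k*g') (g*b'+h*e'+k*h') (g*c'+h*f'+k*k')"
  by (rule eq_matI, auto simp: scalar_prod_def sum3' dest!: less3_cases,
      auto simp: mat3_def row_def col_def)

lemma mat3_mult_vec[simp]: "mat3 a b c d e f g h k *\<^sub>v vec3 x y z =
  vec3 (a*x+b*y+c*z) (d*x+e*y+f*z) (g*x+h*y+k*z)"
  by (rule eq_vecI, auto simp: scalar_prod_def sum3' dest!: less3_cases,
      auto simp: mat3_def vec3_def row_def)

lemma mat3_add[simp]: "mat3 a b c d e f g h k + mat3 a' b' c' d' e' f' g' h' k' =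
  mat3 (a+a') (b+b') (c+c') (d+d') (e+e') (f+f') (g+g') (h+h') (k+k')"
  by (rule eq_matI, auto simp: mat3_def dest!: less3_cases)

lemma mat3_minus[simp]: "mat3 a b c d e f g h k - mat3 a' b' c' d' e' f' g' h' k' =
  mat3 (a-a') (b-b') (c-c') (d-d') (e-e') (f-f') (g-g') (h-h') (k-k')"
  by (rule eq_matI, auto simp: mat3_def dest!: less3_cases)

lemma mat3_smult[simp]: "r \<cdot>\<^sub>m mat3 a b c d e f g h k =
  mat3 (r*a) (r*b) (r*c) (r*d) (r*e) (r*f) (r*g) (r*h) (r*k)"
  by (rule eq_matI, auto simp: mat3_def dest!: less3_cases)

lemma vec3_add[simp]: "vec3 x y z + vec3 x' y' z' = vec3 (x+x') (y+y') (z+z')"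
  by (rule eq_vecI, auto simp: vec3_def dest!: less3_cases)

lemma vec3_smult[simp]: "r \<cdot>\<^sub>v vec3 x y z = vec3 (r*x) (r*y) (r*z)"
  by (rule eq_vecI, auto simp: vec3_def dest!: less3_cases)

lemma one_mat3: "1\<^sub>m 3 = mat3 1 0 0 0 1 0 0 0 1"
  by (rule eq_matI, auto simp: mat3_def dest!: less3_cases)

lemma zero_mat3: "0\<^sub>m 3 3 = mat3 0 0 0 0 0 0 0 0 0"
  by (rule eq_matI, auto simp: mat3_def dest!: less3_cases)

lemma zero_vec3: "0\<^sub>v 3 = vec3 0 0 0"
  by (rule eq_vecI, auto simp: vec3_def dest!: less3_cases)

lemma mat_diag3: "mat_diag 3 f = mat3 (f 0) 0 0 0 (f 1) 0 0 0 (f 2)"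
  unfolding mat_diag_def by (rule eq_matI, auto simp: mat3_def dest!: less3_cases)

lemma mat_of_cols3_carrier[simp]: "mat_of_cols 3 [a, b, c] \<in> carrier_mat 3 3"
proof -
  have "length [a, b, c] = 3" by simp
  thus ?thesis using mat_of_cols_carrier[of 3 "[a, b, c]"] by metis
qed

lemma mat_of_cols3: "mat_of_cols 3 [vec3 a d g, vec3 b e h, vec3 c f k] = mat3 a b c d e f g h k"
  by (rule eq_matI, auto simp: mat3_def vec3_def mat_of_cols_def dest!: less3_cases)

definition det3 :: "'a::comm_ring_1 \<Rightarrow> 'a \<Rightarrow> 'a \<Rightarrow> 'a \<Rightarrow> 'a \<Rightarrow> 'a \<Rightarrow> 'a \<Rightarrow> 'a \<Rightarrow> 'a \<Rightarrow> 'a" where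
  "det3 a b c d e f g h k = a*(e*k - f*h) - b*(d*k - f*g) + c*(d*h - e*g)"

lemma det2: assumes A: "A \<in> carrier_mat 2 2"
  shows "det A = A$$(0,0) * A$$(1,1) - A$$(1,0) * A$$(0,1)"
proof -
  have "det A = (\<Sum>i<2. A $$ (i,0) * cofactor A i 0)"
    by (rule laplace_expansion_column[OF A], auto)
  also have "\<dots> = A$$(0,0) * A$$(1,1) - A$$(1,0) * A$$(0,1)"
    unfolding cofactor_def using A
    by (simp add: numeral_2_eq_2 det_single mat_delete_carrier mat_delete_def)
  finally show ?thesis .
qed

lemma det_mat3: "det (mat3 a b c d e f g h k) = det3 a b c d e f g h k"
proof -
  have "det (mat3 a b c d e f g h k) = (\<Sum>i<3. mat3 a b c d e f g h k $$ (i,0) * cofactor (mat3 a b c d e f g h k) i 0)"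
    by (rule laplace_expansion_column, auto)
  also have "\<dots> = det3 a b c d e f g h k"
    unfolding sum3 cofactor_def
    by (subst (1 2 3) det2, auto simp: mat_delete_def mat3_def det3_def algebra_simps numeral_2_eq_2)
  finally show ?thesis .
qed


definition indep2 :: "'a::field vec \<Rightarrow> 'a vec \<Rightarrow> bool" where
  "indep2 u w \<longleftrightarrow> u$1*w$2 - u$2*w$1 \<noteq> 0 \<or> u$2*w$0 - u$0*w$2 \<noteq> 0 \<or> u$0*w$1 - u$1*w$0 \<noteq> 0"

definition nonder :: "'a::field mat \<Rightarrow> bool" where
  "nonder A \<longleftrightarrow> (\<forall>c0 c1 c2. c0 \<cdot>\<^sub>m 1\<^sub>m 3 + c1 \<cdot>\<^sub>m A + c2 \<cdot>\<^sub>m (A * A) = 0\<^sub>m 3 3 \<longrightarrow> c0 = 0 \<and> c1 = 0 \<and> c2 = 0)"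

lemma S1:
  fixes a b c d e f g h k :: "'a::field"
  assumes nd: "nonder (mat3 a b c d e f g h k)"
  shows "\<exists>x y z. indep2 (vec3 x y z) (mat3 a b c d e f g h k *\<^sub>v vec3 x y z)"
proof (rule ccontr)
  assume "\<not> ?thesis"
  hence H: "\<And>x y z. \<not> indep2 (vec3 x y z) (mat3 a b c d e f g h k *\<^sub>v vec3 x y z)" by blast
  from H[of 1 0 0] H[of 0 1 0] H[of 0 0 1] have z: "d = 0" "g = 0" "b = 0" "h = 0" "c = 0" "f = 0"
    by (auto simp: indep2_def)
  from H[of 1 1 0] H[of 1 0 1] z have "e = a" "k = a" by (auto simp: indep2_def)
  with z nd[unfolded nonder_def, rule_format, of "-a" 1 0] show False
    by (simp add: one_mat3 zero_mat3)
qed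

lemma divlem: assumes "(n::'a::field) \<noteq> 0" "z*n = A*x + B*y" shows "z = A/n*x + B/n*y"
proof -
  have "z = (A*x+B*y)/n" using assms by (simp add: eq_divide_eq)
  thus ?thesis by (simp add: add_divide_distrib)
qed

lemma L2_aux:
  fixes x0 x1 x2 y0 y1 y2 z0 z1 z2 n :: "'a::field"
  assumes n: "n = x0*y1 - x1*y0" "n \<noteq> 0"
    and D: "z0*(x1*y2 - x2*y1) - z1*(x0*y2 - x2*y0) + z2*n = 0"
  shows "\<exists>r s. z0 = r*x0 + s*y0 \<and> z1 = r*x1 + s*y1 \<and> z2 = r*x2 + s*y2"
proof -
  have e0: "z0 * n = (z0*y1 - z1*y0)*x0 + (x0*z1 - x1*z0)*y0" unfolding n by (simp add: algebra_simps)
  have e1: "z1 * n = (z0*y1 - z1*y0)*x1 + (x0*z1 - x1*z0)*y1" unfolding n by (simp add: algebra_simps)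
  have "z2 * n = z2 * n - (z0*(x1*y2 - x2*y1) - z1*(x0*y2 - x2*y0) + z2*n)" using D by simp
  also have "\<dots> = (z0*y1 - z1*y0)*x2 + (x0*z1 - x1*z0)*y2" unfolding n by (simp add: algebra_simps)
  finally have e2: "z2 * n = (z0*y1 - z1*y0)*x2 + (x0*z1 - x1*z0)*y2" .
  show ?thesis
    apply (rule exI[of _ "(z0*y1 - z1*y0)/n"], rule exI[of _ "(x0*z1 - x1*z0)/n"])
    using divlem[OF n(2) e0] divlem[OF n(2) e1] divlem[OF n(2) e2] by blast
qed

lemma L2:
  fixes x0 x1 x2 y0 y1 y2 z0 z1 z2 :: "'a::field"
  assumes "indep2 (vec3 x0 x1 x2) (vec3 y0 y1 y2)"
    and "det3 x0 y0 z0 x1 y1 z1 x2 y2 z2 = 0"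
  shows "\<exists>r s. z0 = r*x0 + s*y0 \<and> z1 = r*x1 + s*y1 \<and> z2 = r*x2 + s*y2"
proof -
  consider "x1*y2 - x2*y1 \<noteq> 0" | "x2*y0 - x0*y2 \<noteq> 0" | "x0*y1 - x1*y0 \<noteq> 0"
    using assms(1) by (auto simp: indep2_def)
  then show ?thesis
  proof cases
    case 1
    have D: "z1*(x2*y0 - x0*y2) - z2*(x1*y0 - x0*y1) + z0*(x1*y2 - x2*y1) = 0"
      using assms(2) unfolding det3_def by (simp add: algebra_simps)
    from L2_aux[OF refl 1 D] show ?thesis by blast
  next
    case 2
    have D: "z2*(x0*y1 - x1*y0) - z0*(x2*y1 - x1*y2) + z1*(x2*y0 - x0*y2) = 0"
      using assms(2) unfolding det3_def by (simp add: algebra_simps)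
    from L2_aux[OF refl 2 D] show ?thesis by blast
  next
    case 3
    have D: "z0*(x1*y2 - x2*y1) - z1*(x0*y2 - x2*y0) + z2*(x0*y1 - x1*y0) = 0"
      using assms(2) unfolding det3_def by (simp add: algebra_simps)
    from L2_aux[OF refl 3 D] show ?thesis by blast
  qed
qed


definition Kmat :: "'a::comm_ring_1 mat \<Rightarrow> 'a vec \<Rightarrow> 'a mat" where
  "Kmat M u = mat_of_cols 3 [u, M *\<^sub>v u, M *\<^sub>v (M *\<^sub>v u)]"

definition Qf :: "'a::comm_ring_1 \<Rightarrow> 'a \<Rightarrow> 'a \<Rightarrow> 'a \<Rightarrow> 'a" where
  "Qf r s z1 z2 = z1*z1 + s*z1*z2 - r*z2*z2"

lemma det_K_M3: "det (Kmat (mat3 0 r al 1 s be 0 0 la) (vec3 x y 1)) =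
  Qf r s (al - la*x + r*y) (be + x + (s - la)*y)"
  unfolding Kmat_def by (simp add: mat_of_cols3 det_mat3 det3_def Qf_def algebra_simps)

lemma S7:
  fixes r s al be la :: "'a::field"
  assumes "r*be + al*la - s*al \<noteq> 0 \<or> al + be*la \<noteq> 0 \<or> la*la - s*la - r \<noteq> 0"
  shows "\<exists>x y. det (Kmat (mat3 0 r al 1 s be 0 0 la) (vec3 x y 1)) \<noteq> 0"
proof (cases "la*la - s*la - r = 0")
  case False
  define p where "p = la*la - s*la - r"
  have p: "p \<noteq> 0" using False p_def by simp
  define x where "x = ((1-al)*(s-la) + r*be)/p"
  define y where "y = (la*be - 1 + al)/p"
  have z1: "al - la*x + r*y = 1"
  proof -
    have "(al - la*x + r*y) * p = al * p - la*((1-al)*(s-la) + r*be) + r*(la*be - 1 + al)"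
      unfolding x_def y_def using p by (simp add: field_simps)
    also have "\<dots> = p" unfolding p_def by (simp add: algebra_simps)
    finally show ?thesis using p by simp
  qed
  have z2: "be + x + (s - la)*y = 0"
  proof -
    have "(be + x + (s - la)*y) * p = be * p + ((1-al)*(s-la) + r*be) + (s-la)*(la*be - 1 + al)"
      unfolding x_def y_def using p by (simp add: field_simps)
    also have "\<dots> = 0" unfolding p_def by (simp add: algebra_simps)
    finally show ?thesis using p by simp
  qed
  show ?thesis
    by (rule exI[of _ x], rule exI[of _ y], simp add: det_K_M3 z1 z2 Qf_def)
next
  case True
  show ?thesis
  proof (rule ccontr)
    assume "\<not> ?thesis"
    hence H: "\<And>x y. det (Kmat (mat3 0 r al 1 s be 0 0 la) (vec3 x y 1)) = 0" by blast
    have h0: "Qf r s al be = 0" using H[of 0 0] by (simp add: det_K_M3)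
    have h1: "Qf r s (al - la) (be + 1) = 0" using H[of 1 0] by (simp add: det_K_M3)
    have "(al + la*be)^2 = Qf r s al be - be*(Qf r s (al - la) (be + 1) - Qf r s al be - (la*la - s*la - r))
         + be*be*(la*la - s*la - r)"
      unfolding Qf_def by (simp add: algebra_simps power2_eq_square)
    hence "(al + la*be)^2 = 0" using h0 h1 True by simp
    hence e: "al = - la*be" by (simp add: algebra_simps add_eq_0_iff2)
    have "r*be + al*la - s*al = - be * (la*la - s*la - r)" unfolding e by (simp add: algebra_simps)
    with True e assms show False by (simp add: algebra_simps)
  qed
qed



lemma mat3_obtain: "X \<in> carrier_mat 3 3 \<Longrightarrow> \<exists>a b c d e f g h k. X = mat3 a b c d e f g h k"
  using mat3_eta by blast

lemma vec3_obtain: "u \<in> carrier_vec 3 \<Longrightarrow> \<exists>x y z. u = vec3 x y z"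
  using vec3_eta by blast

lemmas bsimps = one_mat3 zero_mat3 zero_vec3 mat_of_cols3 det_mat3 det3_def algebra_simps

lemma B1: fixes A X :: "'a::field mat" assumes "A \<in> carrier_mat 3 3" "u \<in> carrier_vec 3"
  shows "(c0 \<cdot>\<^sub>m 1\<^sub>m 3 + c1 \<cdot>\<^sub>m A + c2 \<cdot>\<^sub>m (A*A)) *\<^sub>v u = c0 \<cdot>\<^sub>v u + c1 \<cdot>\<^sub>v (A *\<^sub>v u) + c2 \<cdot>\<^sub>v (A *\<^sub>v (A *\<^sub>v u))"
proof -
  obtain a b c d e f g h k where A: "A = mat3 a b c d e f g h k" using mat3_obtain[OF assms(1)] by blast
  obtain x y z where u: "u = vec3 x y z" using vec3_obtain[OF assms(2)] by blast
  show ?thesis unfolding A u by (simp add: bsimps)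
qed

lemma B2: fixes A X :: "'a::field mat" assumes "A \<in> carrier_mat 3 3" "u \<in> carrier_vec 3" "w \<in> carrier_vec 3" "t \<in> carrier_vec 3"
  shows "A *\<^sub>v (r \<cdot>\<^sub>v u + s \<cdot>\<^sub>v w + q \<cdot>\<^sub>v t) = r \<cdot>\<^sub>v (A *\<^sub>v u) + s \<cdot>\<^sub>v (A *\<^sub>v w) + q \<cdot>\<^sub>v (A *\<^sub>v t)"
proof -
  obtain a b c d e f g h k where A: "A = mat3 a b c d e f g h k" using mat3_obtain[OF assms(1)] by blast
  obtain x y z where u: "u = vec3 x y z" using vec3_obtain[OF assms(2)] by blast
  obtain x' y' z' where w: "w = vec3 x' y' z'" using vec3_obtain[OF assms(3)] by blast
  obtain x'' y'' z'' where t: "t = vec3 x'' y'' z''" using vec3_obtain[OF assms(4)] by blast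
  show ?thesis unfolding A u w t by (simp add: bsimps)
qed

lemma B3: fixes A X :: "'a::field mat" assumes "A \<in> carrier_mat 3 3" "u \<in> carrier_vec 3" "w \<in> carrier_vec 3" "t \<in> carrier_vec 3"
  shows "A * mat_of_cols 3 [u, w, t] = mat_of_cols 3 [A *\<^sub>v u, A *\<^sub>v w, A *\<^sub>v t]"
proof -
  obtain a b c d e f g h k where A: "A = mat3 a b c d e f g h k" using mat3_obtain[OF assms(1)] by blast
  obtain x y z where u: "u = vec3 x y z" using vec3_obtain[OF assms(2)] by blast
  obtain x' y' z' where w: "w = vec3 x' y' z'" using vec3_obtain[OF assms(3)] by blast
  obtain x'' y'' z'' where t: "t = vec3 x'' y'' z''" using vec3_obtain[OF assms(4)] by blast
  show ?thesis unfolding A u w t by (simp add: bsimps)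
qed

lemma B4: fixes u :: "'a::field vec" assumes "u \<in> carrier_vec 3" "w \<in> carrier_vec 3" "t \<in> carrier_vec 3"
  shows "mat_of_cols 3 [u, w, t] * mat3 a b c d e f g h k =
    mat_of_cols 3 [a \<cdot>\<^sub>v u + d \<cdot>\<^sub>v w + g \<cdot>\<^sub>v t, b \<cdot>\<^sub>v u + e \<cdot>\<^sub>v w + h \<cdot>\<^sub>v t, c \<cdot>\<^sub>v u + f \<cdot>\<^sub>v w + k \<cdot>\<^sub>v t]"
proof -
  obtain x y z where u: "u = vec3 x y z" using vec3_obtain[OF assms(1)] by blast
  obtain x' y' z' where w: "w = vec3 x' y' z'" using vec3_obtain[OF assms(2)] by blast
  obtain x'' y'' z'' where t: "t = vec3 x'' y'' z''" using vec3_obtain[OF assms(3)] by blast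
  show ?thesis unfolding u w t by (simp add: bsimps)
qed

lemma B5: fixes u :: "'a::field vec" assumes "u \<in> carrier_vec 3" "w \<in> carrier_vec 3" "t \<in> carrier_vec 3"
  shows "mat_of_cols 3 [u, w, t] *\<^sub>v vec3 a b c = a \<cdot>\<^sub>v u + b \<cdot>\<^sub>v w + c \<cdot>\<^sub>v t"
proof -
  obtain x y z where u: "u = vec3 x y z" using vec3_obtain[OF assms(1)] by blast
  obtain x' y' z' where w: "w = vec3 x' y' z'" using vec3_obtain[OF assms(2)] by blast
  obtain x'' y'' z'' where t: "t = vec3 x'' y'' z''" using vec3_obtain[OF assms(3)] by blast
  show ?thesis unfolding u w t by (simp add: bsimps)
qed

lemma B6: fixes A X :: "'a::field mat" assumes "X \<in> carrier_mat 3 3" "X *\<^sub>v vec3 1 0 0 = 0\<^sub>v 3" "X *\<^sub>v vec3 0 1 0 = 0\<^sub>v 3" "X *\<^sub>v vec3 0 0 1 = 0\<^sub>v 3"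
  shows "X = 0\<^sub>m 3 3"
proof -
  obtain a b c d e f g h k where A: "X = mat3 a b c d e f g h k" using mat3_obtain[OF assms(1)] by blast
  show ?thesis using assms(2-4) unfolding A by (simp add: bsimps)
qed

lemma inv_ex: fixes P :: "'a::field mat" assumes "P \<in> carrier_mat n n" "det P \<noteq> 0"
  shows "\<exists>Pi. Pi \<in> carrier_mat n n \<and> P * Pi = 1\<^sub>m n \<and> Pi * P = 1\<^sub>m n"
  using det_non_zero_imp_unit[OF assms, of "()"] unfolding Units_def ring_mat_def by auto


lemma B2': fixes A :: "'a::field mat" assumes "A \<in> carrier_mat 3 3" "u \<in> carrier_vec 3" "w \<in> carrier_vec 3"
  shows "A *\<^sub>v (r \<cdot>\<^sub>v u + s \<cdot>\<^sub>v w) = r \<cdot>\<^sub>v (A *\<^sub>v u) + s \<cdot>\<^sub>v (A *\<^sub>v w)"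
proof -
  obtain a b c d e f g h k where A: "A = mat3 a b c d e f g h k" using mat3_obtain[OF assms(1)] by blast
  obtain x y z where u: "u = vec3 x y z" using vec3_obtain[OF assms(2)] by blast
  obtain x' y' z' where w: "w = vec3 x' y' z'" using vec3_obtain[OF assms(3)] by blast
  show ?thesis unfolding A u w by (simp add: bsimps)
qed



lemma cyclic:
  fixes A :: "'a::field mat"
  assumes A: "A \<in> carrier_mat 3 3" and nd: "nonder A"
  shows "\<exists>v \<in> carrier_vec 3. det (Kmat A v) \<noteq> 0"
proof (rule ccontr)
  assume "\<not> ?thesis"
  hence H: "\<And>v. v \<in> carrier_vec 3 \<Longrightarrow> det (Kmat A v) = 0" by blast
  obtain a b c d e f g h k where Aeq: "A = mat3 a b c d e f g h k" using mat3_obtain[OF A] by blast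
  from S1[OF nd[unfolded Aeq]] obtain x y z where
    ind0: "indep2 (vec3 x y z) (A *\<^sub>v vec3 x y z)" unfolding Aeq by blast
  define v where "v = vec3 x y z"
  have v: "v \<in> carrier_vec 3" by (simp add: v_def)
  have Avc: "A *\<^sub>v v \<in> carrier_vec 3" using A v by simp
  have AAvc: "A *\<^sub>v (A *\<^sub>v v) \<in> carrier_vec 3" using A v by simp
  obtain p0 p1 p2 where Av: "A *\<^sub>v v = vec3 p0 p1 p2" using vec3_obtain[OF Avc] by blast
  obtain q0 q1 q2 where AAv: "A *\<^sub>v (A *\<^sub>v v) = vec3 q0 q1 q2" using vec3_obtain[OF AAvc] by blast
  have ind: "indep2 (vec3 x y z) (vec3 p0 p1 p2)" using ind0 Av unfolding v_def by simp
  have "det (Kmat A v) = det3 x p0 q0 y p1 q1 z p2 q2"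
    unfolding Kmat_def AAv unfolding Av by (simp add: v_def mat_of_cols3 det_mat3)
  with H[OF v] have "det3 x p0 q0 y p1 q1 z p2 q2 = 0" by simp
  from L2[OF ind this] obtain r s where
    rs: "q0 = r*x + s*p0 \<and> q1 = r*y + s*p1 \<and> q2 = r*z + s*p2" by blast
  have AAv': "A *\<^sub>v (A *\<^sub>v v) = r \<cdot>\<^sub>v v + s \<cdot>\<^sub>v (A *\<^sub>v v)"
    using AAv rs unfolding Av by (simp add: v_def)
  define pA where "pA = (-r) \<cdot>\<^sub>m 1\<^sub>m 3 + (-s) \<cdot>\<^sub>m A + 1 \<cdot>\<^sub>m (A*A)"
  have pA: "pA \<in> carrier_mat 3 3" using A unfolding pA_def by auto
  have pAv: "pA *\<^sub>v v = 0\<^sub>v 3"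
    unfolding pA_def B1[OF A v] AAv' unfolding Av by (simp add: v_def bsimps)
  have pAAv: "pA *\<^sub>v (A *\<^sub>v v) = 0\<^sub>v 3"
    unfolding pA_def B1[OF A Avc] AAv' B2'[OF A v Avc] unfolding AAv' unfolding Av
    by (simp add: v_def bsimps)
  have pAne: "pA \<noteq> 0\<^sub>m 3 3"
    using nd[unfolded nonder_def, rule_format, of "-r" "-s" 1] unfolding pA_def by auto
  obtain w where w: "w \<in> carrier_vec 3" "pA *\<^sub>v w \<noteq> 0\<^sub>v 3"
    using B6[OF pA] pAne by (metis vec3_carrier)
  obtain w0 w1 w2 where weq: "w = vec3 w0 w1 w2" using vec3_obtain[OF w(1)] by blast
  define P where "P = mat_of_cols 3 [v, A *\<^sub>v v, w]"
  have P: "P \<in> carrier_mat 3 3" unfolding P_def by simp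
  have detP: "det P \<noteq> 0"
  proof
    assume "det P = 0"
    hence "det3 x p0 w0 y p1 w1 z p2 w2 = 0"
      unfolding P_def Av weq by (simp add: v_def mat_of_cols3 det_mat3)
    from L2[OF ind this] obtain r' s' where
      rs': "w0 = r'*x + s'*p0 \<and> w1 = r'*y + s'*p1 \<and> w2 = r'*z + s'*p2" by blast
    have "w = r' \<cdot>\<^sub>v v + s' \<cdot>\<^sub>v (A *\<^sub>v v)" unfolding weq Av using rs' by (simp add: v_def)
    hence "pA *\<^sub>v w = r' \<cdot>\<^sub>v (pA *\<^sub>v v) + s' \<cdot>\<^sub>v (pA *\<^sub>v (A *\<^sub>v v))"
      using B2'[OF pA v Avc] by simp
    also have "\<dots> = 0\<^sub>v 3" unfolding pAv pAAv by (simp add: bsimps)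
    finally show False using w by simp
  qed
  obtain Pi where Pi: "Pi \<in> carrier_mat 3 3" "P * Pi = 1\<^sub>m 3" "Pi * P = 1\<^sub>m 3"
    using inv_ex[OF P detP] by blast
  have Awc: "A *\<^sub>v w \<in> carrier_vec 3" using A w by simp
  have cvc: "Pi *\<^sub>v (A *\<^sub>v w) \<in> carrier_vec 3" using Pi Awc by simp
  obtain al be la where cv: "Pi *\<^sub>v (A *\<^sub>v w) = vec3 al be la" using vec3_obtain[OF cvc] by blast
  have Pc: "P *\<^sub>v vec3 al be la = A *\<^sub>v w"
  proof -
    have "P *\<^sub>v vec3 al be la = P *\<^sub>v (Pi *\<^sub>v (A *\<^sub>v w))" by (simp only: cv)
    also have "\<dots> = (P * Pi) *\<^sub>v (A *\<^sub>v w)" by (rule assoc_mult_mat_vec[OF P Pi(1) Awc, symmetric])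
    also have "\<dots> = A *\<^sub>v w" unfolding Pi(2) using Awc by simp
    finally show ?thesis .
  qed
  define M where "M = mat3 0 r al 1 s be 0 0 la"
  have M: "M \<in> carrier_mat 3 3" unfolding M_def by simp
  have AP: "A * P = P * M"
  proof -
    have "A * P = mat_of_cols 3 [A *\<^sub>v v, A *\<^sub>v (A *\<^sub>v v), A *\<^sub>v w]"
      unfolding P_def by (rule B3[OF A v Avc w(1)])
    also have "\<dots> = P * M"
      unfolding M_def P_def B4[OF v Avc w(1)] Pc[symmetric, unfolded P_def B5[OF v Avc w(1)]]
      unfolding AAv' unfolding Av weq by (simp add: v_def bsimps)
    finally show ?thesis .
  qed
  have APu: "A *\<^sub>v (P *\<^sub>v u) = P *\<^sub>v (M *\<^sub>v u)" if u: "u \<in> carrier_vec 3" for u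
  proof -
    have "A *\<^sub>v (P *\<^sub>v u) = (A * P) *\<^sub>v u" using assoc_mult_mat_vec[OF A P u] by simp
    also have "\<dots> = (P * M) *\<^sub>v u" unfolding AP ..
    also have "\<dots> = P *\<^sub>v (M *\<^sub>v u)" using assoc_mult_mat_vec[OF P M u] by simp
    finally show ?thesis .
  qed
  have KP: "Kmat A (P *\<^sub>v u) = P * Kmat M u" if u: "u \<in> carrier_vec 3" for u
  proof -
    have Mu: "M *\<^sub>v u \<in> carrier_vec 3" using M u by simp
    have MMu: "M *\<^sub>v (M *\<^sub>v u) \<in> carrier_vec 3" using M Mu by simp
    show ?thesis unfolding Kmat_def B3[OF P u Mu MMu] APu[OF u] APu[OF Mu] ..
  qed
  define pM where "pM = (-r) \<cdot>\<^sub>m 1\<^sub>m 3 + (-s) \<cdot>\<^sub>m M + 1 \<cdot>\<^sub>m (M*M)"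
  have pAP: "pA *\<^sub>v (P *\<^sub>v u) = P *\<^sub>v (pM *\<^sub>v u)" if u: "u \<in> carrier_vec 3" for u
  proof -
    have Mu: "M *\<^sub>v u \<in> carrier_vec 3" using M u by simp
    have MMu: "M *\<^sub>v (M *\<^sub>v u) \<in> carrier_vec 3" using M Mu by simp
    have Pu: "P *\<^sub>v u \<in> carrier_vec 3" using P u by simp
    show ?thesis unfolding pA_def pM_def B1[OF A Pu] B1[OF M u] B2[OF P u Mu MMu] APu[OF u] APu[OF Mu]
      by simp
  qed
  have Pe3: "P *\<^sub>v vec3 0 0 1 = w" unfolding P_def B5[OF v Avc w(1)] unfolding Av weq
    by (simp add: v_def bsimps)
  have pMe3: "pM *\<^sub>v vec3 0 0 1 = vec3 (r*be + al*la - s*al) (al + be*la) (la*la - s*la - r)"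
    unfolding pM_def M_def by (simp add: bsimps)
  have cond: "r*be + al*la - s*al \<noteq> 0 \<or> al + be*la \<noteq> 0 \<or> la*la - s*la - r \<noteq> 0"
  proof (rule ccontr)
    assume "\<not> ?thesis"
    hence "pM *\<^sub>v vec3 0 0 1 = 0\<^sub>v 3" unfolding pMe3 by (simp add: zero_vec3)
    hence "pA *\<^sub>v w = P *\<^sub>v 0\<^sub>v 3" using pAP[of "vec3 0 0 1"] Pe3 by simp
    also have "\<dots> = 0\<^sub>v 3" using P by (intro eq_vecI, auto)
    finally show False using w by simp
  qed
  from S7[OF cond] obtain x' y' where K0: "det (Kmat M (vec3 x' y' 1)) \<noteq> 0"
    unfolding M_def by blast
  have "det (Kmat A (P *\<^sub>v vec3 x' y' 1)) = det P * det (Kmat M (vec3 x' y' 1))"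
    unfolding KP[OF vec3_carrier] by (rule det_mult[OF P], simp add: Kmat_def)
  also have "\<dots> \<noteq> 0" using detP K0 by simp
  finally show False using H[of "P *\<^sub>v vec3 x' y' 1"] P by simp
qed


lemma nd_lemma:
  fixes B :: "'a::field mat"
  assumes B: "B \<in> carrier_mat 3 3" and nd: "non_derogative B"
  shows "nonder B"
  unfolding nonder_def
proof (intro allI impI)
  fix c0 c1 c2 :: 'a
  assume eq: "c0 \<cdot>\<^sub>m 1\<^sub>m 3 + c1 \<cdot>\<^sub>m B + c2 \<cdot>\<^sub>m (B * B) = 0\<^sub>m 3 3"
  show "c0 = 0 \<and> c1 = 0 \<and> c2 = 0"
  proof (rule ccontr)
    assume ne: "\<not> ?thesis"
    define q where "q = [:c0, c1, c2:]"
    have q0: "q \<noteq> 0" using ne unfolding q_def by auto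
    have d1: "degree [:c1, c2:] \<le> 1" using degree_pCons_le[of c1 "[:c2:]"] by simp
    have dq: "degree q \<le> 2" unfolding q_def using degree_pCons_le[of c0 "[:c1,c2:]"] d1 by simp
    have ev: "mat_poly_eval q B = 0\<^sub>m 3 3"
    proof (rule eq_matI)
      fix i j assume ij: "i < dim_row (0\<^sub>m 3 3 :: 'a mat)" "j < dim_col (0\<^sub>m 3 3 :: 'a mat)"
      hence i: "i < 3" and j: "j < 3" by auto
      define f where "f k = coeff q k * (B ^\<^sub>m k) $$ (i,j)" for k
      have "(\<Sum>k\<le>degree q. f k) = (\<Sum>k\<le>2. f k)"
        by (rule sum.mono_neutral_left, auto simp: f_def coeff_eq_0 dq)
      also have "\<dots> = f 0 + f 1 + f 2" by (simp add: numeral_2_eq_2)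
      also have "\<dots> = (c0 \<cdot>\<^sub>m 1\<^sub>m 3 + c1 \<cdot>\<^sub>m B + c2 \<cdot>\<^sub>m (B * B)) $$ (i,j)"
        using B i j unfolding f_def q_def by (simp add: numeral_2_eq_2)
      also have "\<dots> = 0" unfolding eq using i j by simp
      finally have "(\<Sum>k\<le>degree q. coeff q k * (B ^\<^sub>m k) $$ (i,j)) = 0" unfolding f_def .
      thus "mat_poly_eval q B $$ (i,j) = 0\<^sub>m 3 3 $$ (i,j)"
        unfolding mat_poly_eval_def using B i j by simp
    qed (use B in \<open>auto simp: mat_poly_eval_def\<close>)
    from nd have "is_minimal_polynomial B (char_poly B)" unfolding non_derogative_def .
    hence "degree (char_poly B) \<le> degree q" unfolding is_minimal_polynomial_def
      using q0 ev B by auto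
    moreover have "degree (char_poly B) = 3" using degree_monic_char_poly[OF B] by simp
    ultimately show False using dq by simp
  qed
qed


lemma trace_mat3: "mat_trace (mat3 a b c d e f g h k) = a + e + k"
  unfolding mat_trace_def by (simp add: sum3)

lemma trace_comm3: fixes X Y :: "'a::field mat"
  assumes "X \<in> carrier_mat 3 3" "Y \<in> carrier_mat 3 3"
  shows "mat_trace (X * Y) = mat_trace (Y * X)"
proof -
  obtain a b c d e f g h k where X: "X = mat3 a b c d e f g h k" using mat3_obtain[OF assms(1)] by blast
  obtain a' b' c' d' e' f' g' h' k' where Y: "Y = mat3 a' b' c' d' e' f' g' h' k'" using mat3_obtain[OF assms(2)] by blast
  show ?thesis unfolding X Y by (simp add: trace_mat3 algebra_simps)
qed

lemma assoc3: fixes A :: "'a::field mat"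
  shows "A \<in> carrier_mat 3 3 \<Longrightarrow> B \<in> carrier_mat 3 3 \<Longrightarrow> C \<in> carrier_mat 3 3 \<Longrightarrow> A * B * C = A * (B * C)"
  by (rule assoc_mult_mat)

lemma mult3: fixes A :: "'a::field mat"
  shows "A \<in> carrier_mat 3 3 \<Longrightarrow> B \<in> carrier_mat 3 3 \<Longrightarrow> A * B \<in> carrier_mat 3 3"
  by (rule mult_carrier_mat)

lemma cancel3: fixes A :: "'a::field mat"
  shows "A \<in> carrier_mat 3 3 \<Longrightarrow> B \<in> carrier_mat 3 3 \<Longrightarrow> Y \<in> carrier_mat 3 3 \<Longrightarrow> A * B = 1\<^sub>m 3 \<Longrightarrow> A * (B * Y) = Y"
  by (metis assoc_mult_mat left_mult_one_mat)

theorem proposition2p3: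
  fixes B :: "'a :: field mat" and u2 :: 'a
  assumes "CHAR('a) = 2"
    and "infinite (UNIV :: 'a set) \<or> card (UNIV :: 'a set) \<ge> 4"
    and "B \<in> carrier_mat 3 3"
    and "non_derogative B"
    and "mat_trace B = u2"
  shows "\<forall>a :: 'a. a \<noteq> u2 \<and> a \<noteq> u2 + 1 \<longrightarrow>
    (\<exists>N D. N \<in> carrier_mat 3 3 \<and> D \<in> carrier_mat 3 3 \<and>
       B = N + D \<and> N * N = 0\<^sub>m 3 3 \<and>
       similar_mat D (mat_diag 3 (\<lambda>i. [a, a + 1, u2 + 1] ! i)))"
proof (intro allI impI)
  fix a :: 'a
  assume aa: "a \<noteq> u2 \<and> a \<noteq> u2 + 1"
  note B = assms(3)
  have two: "(2::'a) = 0" using assms(1) by (metis of_nat_CHAR of_nat_numeral)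
  have nd: "nonder B" by (rule nd_lemma[OF B assms(4)])
  obtain v where v: "v \<in> carrier_vec 3" and dK: "det (Kmat B v) \<noteq> 0"
    using cyclic[OF B nd] by blast
  have Bv: "B *\<^sub>v v \<in> carrier_vec 3" using B v by simp
  have BBv: "B *\<^sub>v (B *\<^sub>v v) \<in> carrier_vec 3" using B Bv by simp
  have BBBv: "B *\<^sub>v (B *\<^sub>v (B *\<^sub>v v)) \<in> carrier_vec 3" using B BBv by simp
  define P where "P = Kmat B v"
  have P: "P \<in> carrier_mat 3 3" unfolding P_def Kmat_def by simp
  obtain Pi where Pi: "Pi \<in> carrier_mat 3 3" "P * Pi = 1\<^sub>m 3" "Pi * P = 1\<^sub>m 3"
    using inv_ex[OF P dK[folded P_def]] by blast
  have cvc: "Pi *\<^sub>v (B *\<^sub>v (B *\<^sub>v (B *\<^sub>v v))) \<in> carrier_vec 3" using Pi BBBv by simp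
  obtain c0 c1 c2 where cv: "Pi *\<^sub>v (B *\<^sub>v (B *\<^sub>v (B *\<^sub>v v))) = vec3 c0 c1 c2"
    using vec3_obtain[OF cvc] by blast
  have Pc: "P *\<^sub>v vec3 c0 c1 c2 = B *\<^sub>v (B *\<^sub>v (B *\<^sub>v v))"
  proof -
    have "P *\<^sub>v vec3 c0 c1 c2 = P *\<^sub>v (Pi *\<^sub>v (B *\<^sub>v (B *\<^sub>v (B *\<^sub>v v))))" by (simp only: cv)
    also have "\<dots> = (P * Pi) *\<^sub>v (B *\<^sub>v (B *\<^sub>v (B *\<^sub>v v)))"
      by (rule assoc_mult_mat_vec[OF P Pi(1) BBBv, symmetric])
    also have "\<dots> = B *\<^sub>v (B *\<^sub>v (B *\<^sub>v v))" unfolding Pi(2) using BBBv by simp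
    finally show ?thesis .
  qed
  define C where "C = mat3 0 0 c0 1 0 c1 0 1 c2"
  have Cc: "C \<in> carrier_mat 3 3" unfolding C_def by simp
  obtain x0 x1 x2 where v3: "v = vec3 x0 x1 x2" using vec3_obtain[OF v] by blast
  obtain y0 y1 y2 where Bv3: "B *\<^sub>v v = vec3 y0 y1 y2" using vec3_obtain[OF Bv] by blast
  obtain z0 z1 z2 where BBv3: "B *\<^sub>v (B *\<^sub>v v) = vec3 z0 z1 z2" using vec3_obtain[OF BBv] by blast
  have BP: "B * P = P * C"
  proof -
    have "B * P = mat_of_cols 3 [B *\<^sub>v v, B *\<^sub>v (B *\<^sub>v v), B *\<^sub>v (B *\<^sub>v (B *\<^sub>v v))]"
      unfolding P_def Kmat_def by (rule B3[OF B v Bv BBv])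
    also have "\<dots> = P * C"
      unfolding C_def P_def Kmat_def B4[OF v Bv BBv] Pc[symmetric, unfolded P_def Kmat_def B5[OF v Bv BBv]]
      unfolding BBv3 unfolding Bv3 unfolding v3 by (simp add: bsimps)
    finally show ?thesis .
  qed
  have Beq: "B = P * (C * Pi)"
  proof -
    have "B = B * (P * Pi)" unfolding Pi(2) using B by simp
    also have "\<dots> = (B * P) * Pi" using B P Pi(1) by simp
    also have "\<dots> = P * (C * Pi)" unfolding BP using P Cc Pi(1) by simp
    finally show ?thesis .
  qed
  have trC: "c2 = u2"
  proof -
    have "u2 = mat_trace (P * (C * Pi))" using assms(5) Beq by simp
    also have "\<dots> = mat_trace ((C * Pi) * P)" by (rule trace_comm3, use P Cc Pi in auto)
    also have "\<dots> = mat_trace C" using Cc Pi P by simp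
    also have "\<dots> = c2" unfolding C_def trace_mat3 by simp
    finally show ?thesis by simp
  qed
  define l1 where "l1 = a"
  define l2 where "l2 = a + 1"
  define l3 where "l3 = u2 + 1"
  have sum_l: "c2 = l1 + l2 + l3"
  proof -
    have "l1 + l2 + l3 = u2 + 2 * (a + 1)" unfolding l1_def l2_def l3_def by (simp add: algebra_simps)
    thus ?thesis using trC two by simp
  qed
  have d12: "l1 \<noteq> l2" unfolding l1_def l2_def by simp
  have d13: "l1 \<noteq> l3" unfolding l1_def l3_def using aa by simp
  have d23: "l2 \<noteq> l3" unfolding l2_def l3_def using aa by simp
  define d0 where "d0 = l1 * l2 * l3"
  define d1 where "d1 = - (l1 * l2 + l1 * l3 + l2 * l3)"
  define C' where "C' = mat3 0 0 d0 1 0 d1 0 1 c2"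
  have C'c: "C' \<in> carrier_mat 3 3" unfolding C'_def by simp
  define W where "W = mat3 1 l1 (l1*l1) 1 l2 (l2*l2) 1 l3 (l3*l3)"
  have Wc: "W \<in> carrier_mat 3 3" unfolding W_def by simp
  define L where "L = mat_diag 3 (\<lambda>i. [a, a + 1, u2 + 1] ! i)"
  have L3: "L = mat3 l1 0 0 0 l2 0 0 0 l3" unfolding L_def mat_diag3 l1_def l2_def l3_def
    by (simp add: numeral_2_eq_2)
  have Lc: "L \<in> carrier_mat 3 3" unfolding L3 by simp
  have root: "d0 + d1 * l + c2 * (l * l) = l * (l * l)" if "l = l1 \<or> l = l2 \<or> l = l3" for l
  proof -
    have "(l - l1) * (l - l2) * (l - l3) = 0" using that by auto
    thus ?thesis unfolding d0_def d1_def sum_l by (simp add: algebra_simps)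
  qed
  have WC: "W * C' = L * W"
    unfolding W_def C'_def L3 using root[of l1] root[of l2] root[of l3] by (simp add: algebra_simps)
  have dW: "det W \<noteq> 0"
  proof -
    have "det W = (l2 - l1) * (l3 - l1) * (l3 - l2)" unfolding W_def det_mat3 det3_def
      by (simp add: algebra_simps)
    thus ?thesis using d12 d13 d23 by simp
  qed
  obtain Wi where Wi: "Wi \<in> carrier_mat 3 3" "W * Wi = 1\<^sub>m 3" "Wi * W = 1\<^sub>m 3"
    using inv_ex[OF Wc dW] by blast
  have C'eq: "C' = Wi * (L * W)"
  proof -
    have "C' = (Wi * W) * C'" unfolding Wi(3) using C'c by simp
    also have "\<dots> = Wi * (W * C')" using Wi(1) Wc C'c by simp
    also have "\<dots> = Wi * (L * W)" unfolding WC ..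
    finally show ?thesis .
  qed
  define D where "D = P * (C' * Pi)"
  define N where "N = P * ((C - C') * Pi)"
  have Dc: "D \<in> carrier_mat 3 3" unfolding D_def using P C'c Pi by simp
  have CCc: "C - C' \<in> carrier_mat 3 3" unfolding C_def C'_def by simp
  have Nc: "N \<in> carrier_mat 3 3" unfolding N_def using P CCc Pi by simp
  have CC: "(C - C') * (C - C') = 0\<^sub>m 3 3" unfolding C_def C'_def by (simp add: bsimps)
  show "\<exists>N D. N \<in> carrier_mat 3 3 \<and> D \<in> carrier_mat 3 3 \<and>
       B = N + D \<and> N * N = 0\<^sub>m 3 3 \<and>
       similar_mat D (mat_diag 3 (\<lambda>i. [a, a + 1, u2 + 1] ! i))"
  proof (intro exI conjI)
    show "N \<in> carrier_mat 3 3" by (rule Nc)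
    show "D \<in> carrier_mat 3 3" by (rule Dc)
    show "B = N + D"
    proof -
      have X1: "(C - C') * Pi \<in> carrier_mat 3 3" using CCc Pi(1) by simp
      have X2: "C' * Pi \<in> carrier_mat 3 3" using C'c Pi(1) by simp
      have "N + D = P * ((C - C') * Pi + C' * Pi)" unfolding N_def D_def
        by (rule mult_add_distrib_mat[OF P X1 X2, symmetric])
      also have "(C - C') * Pi + C' * Pi = ((C - C') + C') * Pi"
        by (rule add_mult_distrib_mat[OF CCc C'c Pi(1), symmetric])
      also have "(C - C') + C' = C" unfolding C_def C'_def by (simp add: bsimps)
      finally show ?thesis using Beq by simp
    qed
    show "N * N = 0\<^sub>m 3 3"
    proof -
      have "N * N = P * ((C - C') * (Pi * (P * ((C - C') * Pi))))"
        unfolding N_def using P CCc Pi(1) by (simp add: assoc3 mult3)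
      also have "\<dots> = P * ((C - C') * ((C - C') * Pi))"
        using cancel3[OF Pi(1) P _ Pi(3), of "(C - C') * Pi"] CCc Pi(1) by (simp add: mult3)
      also have "\<dots> = P * (((C - C') * (C - C')) * Pi)" using CCc Pi(1) by (simp add: assoc3)
      also have "\<dots> = 0\<^sub>m 3 3" unfolding CC using P Pi(1) by simp
      finally show ?thesis .
    qed
    show "similar_mat D (mat_diag 3 (\<lambda>i. [a, a + 1, u2 + 1] ! i))"
      unfolding L_def[symmetric] similar_mat_def
    proof (intro exI)
      show "similar_mat_wit D L (P * Wi) (W * Pi)"
        unfolding similar_mat_wit_def Let_def
      proof (intro conjI)
        show "{D, L, P * Wi, W * Pi} \<subseteq> carrier_mat (dim_row D) (dim_row D)"
          using Dc Lc P Wi(1) Wc Pi(1) by auto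
        have "P * Wi * (W * Pi) = P * ((Wi * W) * Pi)" using P Wi(1) Wc Pi(1) by (simp add: assoc3 mult3)
        also have "\<dots> = 1\<^sub>m 3" unfolding Wi(3) using P Pi by simp
        finally show "P * Wi * (W * Pi) = 1\<^sub>m (dim_row D)" using Dc by simp
        have "W * Pi * (P * Wi) = W * ((Pi * P) * Wi)" using P Wi(1) Wc Pi(1) by (simp add: assoc3 mult3)
        also have "\<dots> = 1\<^sub>m 3" unfolding Pi(3) using Wc Wi by simp
        finally show "W * Pi * (P * Wi) = 1\<^sub>m (dim_row D)" using Dc by simp
        have "P * Wi * L * (W * Pi) = P * ((Wi * (L * W)) * Pi)" using P Wi(1) Lc Wc Pi(1) by (simp add: assoc3 mult3)
        also have "\<dots> = D" unfolding C'eq[symmetric] D_def ..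
        finally show "D = P * Wi * L * (W * Pi)" by simp
      qed
    qed
  qed
qed

end
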